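(* Let $(G,\mathcal{A})$ be a local convergence pairing on $X$, and let $B,A_1,\dots,A_m\in\mathcal{A}$ be a crossing sequence. Let $(f_i)\subset G$ act as a convergence sequence on $B$ with attractor $p$ and repeller $n$. If for all $1\le j\le m$ we have $n\notin A_j$ and $f_i^{-1}(p)\notin A_j$ for all $i$, then $f_i(A_j)\to p$ for all $1\le j\le m$.
   Context: $X$ is a Peano continuum (compact, connected, locally connected metric space) without cut points and $G$ acts on $X$ by homeomorphisms; $\mathcal{A}$ is a $G$-invariant collection of closed subsets of $X$. For a closed set $S\subset X$ and connected $B,C\subset X\setminus S$, $S$ separates $B$ from $C$ if they lie in different components of $X\setminus S$; $S$ separates $Y$ if it separates two points of $Y$. Closed sets $A,B$ cross if $A\cap B\neq\emptyset$ or ($A$ separates $B$ and $B$ separates $A$). A crossing sequence is a sequence $A_1,\dots,A_n$ with $A_i$ crossing $A_{i+1}$ for $1\le i<n$. For $S\subset X$ and $p\in X$, $g_i(S)\to p$ means every neighborhood of $p$ contains $g_i(S)$ for all large $i$. A sequence $(g_i)$ of homeomorphisms of a space $Y$ is a convergence sequence on $Y$ with repeller $n$ and attractor $p$ if $g_i(C)\to p$ for every compact $C\subset Y\setminus\{n\}$; a sequence in $G$ acting as a convergence sequence on $A\in\mathcal{A}$ means its elements preserve $A$ and their restrictions form a convergence sequence on $A$. A group acts as a convergence group on $Y$ if every sequence of distinct elements has a subsequence that is a convergence sequence on $Y$. $(G,\mathcal{A})$ is a local convergence pairing on $X$ if: (1) $|A|>2$ for all $A\in\mathcal{A}$; (2)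 for each $\epsilon>0$ only finitely many $A\in\mathcal{A}$ have diameter $>\epsilon$; (3) for any $x,y\in X$ some finite $\mathcal{B}\subset\mathcal{A}$ has $\bigcup\mathcal{B}$ separating $x$ from $y$; (4) each stabilizer $\mathrm{Stab}(A)=\{g: g(A)=A\}$ acts as a convergence group on $A$; (5) for any $A,B\in\mathcal{A}$ with $|A\cap B|\le 2$: if $A\cap B=\{c\}$ then for any $b\in B\setminus\{c\}$ there is a finite crossing sequence $A,A_1,\dots,A_n,B$ in $\mathcal{A}$ with $\{b,c\}\cap A_i=\emptyset$ for $1\le i\le n$; if $|A\cap B|\ne1$ there is a crossing sequence $A,A_1,\dots,A_n,B$ in $\mathcal{A}$ with $(A\cap B)\cap A_i=\emptyset$ for $1\le i\le n$. *)

theory Defs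
  imports "HOL-Analysis.Analysis" "HOL-Algebra.Group_Action"
begin

definition peano_continuum :: "'a::metric_space set \<Rightarrow> bool" where
  "peano_continuum X \<longleftrightarrow> X \<noteq> {} \<and> compact X \<and> connected X \<and> locally connected X"

definition no_cut_points :: "'a::topological_space set \<Rightarrow> bool" where
  "no_cut_points X \<longleftrightarrow> (\<forall>x\<in>X. connected (X - {x}))"

definition separates_pts :: "'a::topological_space set \<Rightarrow> 'a set \<Rightarrow> 'a \<Rightarrow> 'a \<Rightarrow> bool" where
  "separates_pts X S x y \<longleftrightarrow> x \<in> X - S \<and> y \<in> X - S \<and> y \<notin> connected_component_set (X - S) x"

definition separates :: "'a::topological_space set \<Rightarrow> 'a set \<Rightarrow> 'a set \<Rightarrow> bool" where
  "separates X S Y \<longleftrightarrow> (\<exists>x\<in>Y. \<exists>y\<in>Y. separates_pts X S x y)"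

definition crosses :: "'a::topological_space set \<Rightarrow> 'a set \<Rightarrow> 'a set \<Rightarrow> bool" where
  "crosses X A B \<longleftrightarrow> A \<inter> B \<noteq> {} \<or> (separates X A B \<and> separates X B A)"

definition crossing_seq :: "'a::topological_space set \<Rightarrow> 'a set list \<Rightarrow> bool" where
  "crossing_seq X L \<longleftrightarrow> (\<forall>i. Suc i < length L \<longrightarrow> crosses X (L ! i) (L ! Suc i))"

definition sets_tend_to :: "(nat \<Rightarrow> 'a::topological_space set) \<Rightarrow> 'a \<Rightarrow> bool" where
  "sets_tend_to S p \<longleftrightarrow> (\<forall>U. open U \<and> p \<in> U \<longrightarrow> (\<forall>\<^sub>F i in sequentially. S i \<subseteq> U))"

definition conv_seq_maps :: "'a::topological_space set \<Rightarrow> (nat \<Rightarrow> 'a \<Rightarrow> 'a) \<Rightarrow> 'a \<Rightarrow> 'a \<Rightarrow> bool" where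
  "conv_seq_maps Y h n p \<longleftrightarrow> n \<in> Y \<and> p \<in> Y \<and>
     (\<forall>C. compact C \<and> C \<subseteq> Y - {n} \<longrightarrow> sets_tend_to (\<lambda>i. h i ` C) p)"

definition acts_conv_seq :: "('g, 'c) monoid_scheme \<Rightarrow> ('g \<Rightarrow> 'a::topological_space \<Rightarrow> 'a)
    \<Rightarrow> (nat \<Rightarrow> 'g) \<Rightarrow> 'a set \<Rightarrow> 'a \<Rightarrow> 'a \<Rightarrow> bool" where
  "acts_conv_seq G \<phi> f A n p \<longleftrightarrow> (\<forall>i. f i \<in> carrier G \<and> \<phi> (f i) ` A = A) \<and>
     conv_seq_maps A (\<lambda>i. \<phi> (f i)) n p"

definition Stab :: "('g, 'c) monoid_scheme \<Rightarrow> ('g \<Rightarrow> 'a \<Rightarrow> 'a) \<Rightarrow> 'a set \<Rightarrow> 'g set" where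
  "Stab G \<phi> A = {g \<in> carrier G. \<phi> g ` A = A}"

definition conv_group_on :: "('g, 'c) monoid_scheme \<Rightarrow> ('g \<Rightarrow> 'a::topological_space \<Rightarrow> 'a)
    \<Rightarrow> 'g set \<Rightarrow> 'a set \<Rightarrow> bool" where
  "conv_group_on G \<phi> H A \<longleftrightarrow> (\<forall>f::nat \<Rightarrow> 'g. (\<forall>i. f i \<in> H) \<and> inj f \<longrightarrow>
     (\<exists>(r::nat \<Rightarrow> nat) n p. strict_mono r \<and> acts_conv_seq G \<phi> (f \<circ> r) A n p))"

definition acts_by_homeos :: "('g, 'c) monoid_scheme \<Rightarrow> 'a::topological_space set \<Rightarrow> ('g \<Rightarrow> 'a \<Rightarrow> 'a) \<Rightarrow> bool" where
  "acts_by_homeos G X \<phi> \<longleftrightarrow> group_action G X \<phi> \<and>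
     (\<forall>g\<in>carrier G. homeomorphism X X (\<phi> g) (\<phi> (inv\<^bsub>G\<^esub> g)))"

definition local_convergence_pairing ::
  "('g, 'c) monoid_scheme \<Rightarrow> ('g \<Rightarrow> 'a::metric_space \<Rightarrow> 'a) \<Rightarrow> 'a set set \<Rightarrow> 'a set \<Rightarrow> bool" where
  "local_convergence_pairing G \<phi> \<A> X \<longleftrightarrow>
     \<comment> \<open>standing: \<A> is a G-invariant collection of closed subsets of X\<close>
     (\<forall>A\<in>\<A>. closed A \<and> A \<subseteq> X) \<and>
     (\<forall>g\<in>carrier G. \<forall>A\<in>\<A>. \<phi> g ` A \<in> \<A>) \<and>
     \<comment> \<open>(1)\<close>
     (\<forall>A\<in>\<A>. infinite A \<or> card A > 2) \<and>
     \<comment> \<open>(2)\<close>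
     (\<forall>\<epsilon>>0. finite {A\<in>\<A>. diameter A > \<epsilon>}) \<and>
     \<comment> \<open>(3)\<close>
     (\<forall>x\<in>X. \<forall>y\<in>X. x \<noteq> y \<longrightarrow>
        (\<exists>\<B>. finite \<B> \<and> \<B> \<subseteq> \<A> \<and> separates_pts X (\<Union>\<B>) x y)) \<and>
     \<comment> \<open>(4)\<close>
     (\<forall>A\<in>\<A>. conv_group_on G \<phi> (Stab G \<phi> A) A) \<and>
     \<comment> \<open>(5)\<close>
     (\<forall>A\<in>\<A>. \<forall>B\<in>\<A>. finite (A \<inter> B) \<and> card (A \<inter> B) \<le> 2 \<longrightarrow>
        (\<forall>c. A \<inter> B = {c} \<longrightarrow>
           (\<forall>b\<in>B - {c}. \<exists>As. set As \<subseteq> \<A> \<and> crossing_seq X (A # As @ [B]) \<and>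
               (\<forall>Ai\<in>set As. b \<notin> Ai \<and> c \<notin> Ai))) \<and>
        (card (A \<inter> B) \<noteq> 1 \<longrightarrow>
           (\<exists>As. set As \<subseteq> \<A> \<and> crossing_seq X (A # As @ [B]) \<and>
               (\<forall>Ai\<in>set As. A \<inter> B \<inter> Ai = {}))))"

end

theory Submission
  imports Defs
begin

lemma key_conclude:
  fixes X :: "'a::metric_space set" and h k :: "nat \<Rightarrow> 'a \<Rightarrow> 'a"
  assumes X: "compact X" "locally connected X"
    and hom: "\<And>i. homeomorphism X X (h i) (k i)"
    and fin: "\<forall>\<epsilon>>0. finite {A\<in>\<A>. diameter A > \<epsilon>}"
    and inA: "\<And>i. h i ` A' \<in> \<A>"
    and cl: "\<And>i. closed (h i ` A')"
    and sub: "A' \<subseteq> X"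
    and np: "\<And>i. p \<notin> h i ` A'"
    and alt: "(\<exists>a\<in>A'. (\<lambda>i. h i a) \<longlonglongrightarrow> p) \<or>
              (\<exists>x y. separates_pts X A' x y \<and> (\<lambda>i. h i x) \<longlonglongrightarrow> p \<and> (\<lambda>i. h i y) \<longlonglongrightarrow> p)"
  shows "sets_tend_to (\<lambda>i. h i ` A') p"
proof (rule ccontr)
  assume "\<not> sets_tend_to (\<lambda>i. h i ` A') p"
  then obtain U where U: "open U" "p \<in> U" and fr: "\<exists>\<^sub>F i in sequentially. \<not> h i ` A' \<subseteq> U"
    unfolding sets_tend_to_def by (auto simp: not_eventually)
  have hX: "h i ` A' \<subseteq> X" for i using hom[of i] sub unfolding homeomorphism_def by blast
  have bnd: "bounded (h i ` A')" for i
    using hX[of i] X(1) bounded_subset compact_imp_bounded by blast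
  have "\<exists>\<delta>>0. \<exists>\<^sub>F i in sequentially. h i ` A' \<inter> ball p \<delta> = {}"
  proof -
    obtain e where e: "e > 0" "ball p e \<subseteq> U" using U open_contains_ball by blast
    define \<epsilon> where "\<epsilon> = e / 2"
    have \<epsilon>: "\<epsilon> > 0" "ball p (2*\<epsilon>) \<subseteq> U" using e by (auto simp: \<epsilon>_def)
    show ?thesis
    proof (cases "\<exists>\<^sub>F i in sequentially. h i ` A' \<inter> ball p \<epsilon> = {}")
      case True then show ?thesis using \<epsilon> by blast
    next
      case False
      then have ev: "\<forall>\<^sub>F i in sequentially. h i ` A' \<inter> ball p \<epsilon> \<noteq> {}"
        by (simp add: not_frequently)
      define F where "F = {A\<in>\<A>. diameter A > \<epsilon>/2}"
      have finF: "finite F" unfolding F_def by (rule fin[rule_format]) (use \<epsilon> in simp)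
      have "\<exists>\<^sub>F i in sequentially. h i ` A' \<in> F"
      proof -
        have "\<exists>\<^sub>F i in sequentially. h i ` A' \<inter> ball p \<epsilon> \<noteq> {} \<and> \<not> h i ` A' \<subseteq> U"
          using frequently_eventually_conj[OF fr ev] by (simp add: conj_commute)
        then show ?thesis
        proof (rule frequently_elim1)
          fix i assume a: "h i ` A' \<inter> ball p \<epsilon> \<noteq> {} \<and> \<not> h i ` A' \<subseteq> U"
          then obtain z1 z2 where z: "z1 \<in> h i ` A'" "dist p z1 < \<epsilon>" "z2 \<in> h i ` A'" "z2 \<notin> U"
            by (auto simp: mem_ball) blast
          have "dist p z2 \<ge> 2*\<epsilon>" using z(4) \<epsilon>(2) by (auto simp: mem_ball subset_eq not_less)
          then have "dist z1 z2 \<ge> \<epsilon>" using z(2) dist_triangle[of p z2 z1] by (simp add: dist_commute)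
          moreover have "dist z1 z2 \<le> diameter (h i ` A')"
            using diameter_bounded_bound[OF bnd z(1) z(3)] .
          ultimately show "h i ` A' \<in> F" using inA[of i] \<epsilon> unfolding F_def by auto
        qed
      qed
      then obtain C where C: "C \<in> F" "\<exists>\<^sub>F i in sequentially. h i ` A' = C"
      proof -
        assume r: "\<And>C. C \<in> F \<Longrightarrow> \<exists>\<^sub>F i in sequentially. h i ` A' = C \<Longrightarrow> thesis"
        show thesis
        proof (rule ccontr)
          assume "\<not> thesis"
          then have "\<forall>C\<in>F. \<forall>\<^sub>F i in sequentially. h i ` A' \<noteq> C"
          proof (intro ballI)
            fix C assume CF: "C \<in> F"
            show "\<forall>\<^sub>F i in sequentially. h i ` A' \<noteq> C"
            proof (rule ccontr)
              assume "\<not> (\<forall>\<^sub>F i in sequentially. h i ` A' \<noteq> C)"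
              then have "\<exists>\<^sub>F i in sequentially. h i ` A' = C" by (simp add: not_eventually)
              then show False using r[OF CF] \<open>\<not> thesis\<close> by simp
            qed
          qed
          then have "\<forall>\<^sub>F i in sequentially. \<forall>C\<in>F. h i ` A' \<noteq> C"
            by (rule eventually_ball_finite[OF finF])
          then have "\<forall>\<^sub>F i in sequentially. h i ` A' \<notin> F" by (rule eventually_mono) auto
          with \<open>\<exists>\<^sub>F i in sequentially. h i ` A' \<in> F\<close> show False
            by (simp add: not_frequently[symmetric])
        qed
      qed
      obtain i0 where i0: "h i0 ` A' = C" using C(2) frequently_ex by blast
      have "p \<notin> C" "closed C" using np[of i0] cl[of i0] i0 by auto
      then have "open (- C)" "p \<in> - C" by auto
      then obtain \<delta> where \<delta>: "\<delta> > 0" "ball p \<delta> \<subseteq> - C" using open_contains_ball by blast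
      have "\<exists>\<^sub>F i in sequentially. h i ` A' \<inter> ball p \<delta> = {}"
        using C(2) by (rule frequently_elim1) (use \<delta> in auto)
      then show ?thesis using \<delta> by blast
    qed
  qed
  then obtain \<delta> where \<delta>: "\<delta> > 0" and frd: "\<exists>\<^sub>F i in sequentially. h i ` A' \<inter> ball p \<delta> = {}"
    by blast
  show False
  proof (cases "\<exists>a\<in>A'. (\<lambda>i. h i a) \<longlonglongrightarrow> p")
    case True
    then obtain a where a: "a \<in> A'" "(\<lambda>i. h i a) \<longlonglongrightarrow> p" by blast
    have "\<forall>\<^sub>F i in sequentially. h i a \<in> ball p \<delta>"
      using a(2) \<delta> by (intro topological_tendstoD) auto
    from frequently_eventually_conj[OF frd this] obtain i where
      "h i ` A' \<inter> ball p \<delta> = {}" "h i a \<in> ball p \<delta>" using frequently_ex by blast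
    then show False using a(1) by blast
  next
    case False
    with alt obtain x y where sep: "separates_pts X A' x y" and
      tx: "(\<lambda>i. h i x) \<longlonglongrightarrow> p" and ty: "(\<lambda>i. h i y) \<longlonglongrightarrow> p" by blast
    have xX: "x \<in> X" "x \<notin> A'" "y \<in> X" "y \<notin> A'" using sep unfolding separates_pts_def by auto
    have pX: "p \<in> X"
    proof -
      have "closed X" using X(1) compact_imp_closed by blast
      moreover have "\<forall>i. h i x \<in> X"
        using hom xX unfolding homeomorphism_def by blast
      ultimately show ?thesis using closed_sequentially[OF _ _ tx] by blast
    qed
    have "openin (top_of_set X) (X \<inter> ball p \<delta>)" by (auto intro: openin_open_Int)
    then obtain u where u: "openin (top_of_set X) u" "connected u" "p \<in> u" "u \<subseteq> X \<inter> ball p \<delta>"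
      using X(2) pX \<delta> unfolding locally_connected by (meson IntI centre_in_ball)
    then obtain W where W: "open W" "u = X \<inter> W" by (auto simp: openin_open)
    have "\<forall>\<^sub>F i in sequentially. h i x \<in> W" using tx W u(3) by (intro topological_tendstoD) auto
    moreover have "\<forall>\<^sub>F i in sequentially. h i y \<in> W" using ty W u(3) by (intro topological_tendstoD) auto
    ultimately have "\<forall>\<^sub>F i in sequentially. h i x \<in> W \<and> h i y \<in> W" by (rule eventually_conj)
    from frequently_eventually_conj[OF frd this] obtain i where
      i: "h i ` A' \<inter> ball p \<delta> = {}" "h i x \<in> W" "h i y \<in> W" using frequently_ex by blast
    have H: "\<forall>z\<in>X. k i (h i z) = z" "h i ` X = X" "\<forall>z\<in>X. h i (k i z) = z" "k i ` X = X"
      "continuous_on X (k i)" using hom[of i] unfolding homeomorphism_def by auto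
    have "h i x \<in> X" "h i y \<in> X" using H(2) xX(1,3) by blast+
    then have hxu: "h i x \<in> u" "h i y \<in> u" using i(2,3) W(2) by blast+
    have "u \<subseteq> X" using u(4) by blast
    have "connected (k i ` u)"
      using connected_continuous_image[OF continuous_on_subset[OF H(5) \<open>u \<subseteq> X\<close>] u(2)] .
    moreover have "k i ` u \<subseteq> X - A'"
    proof
      fix w assume "w \<in> k i ` u"
      then obtain z where z: "z \<in> u" "w = k i z" by blast
      have "z \<in> X" "z \<in> ball p \<delta>" using z u by auto
      then have "w \<in> X" using H(4) z(2) by blast
      moreover have "w \<notin> A'"
      proof
        assume "w \<in> A'"
        then have "h i w \<in> h i ` A'" by blast
        moreover have "h i w = z" using H(3) \<open>z \<in> X\<close> z(2) by blast
        ultimately have "z \<in> h i ` A'" by simp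
        then show False using i(1) \<open>z \<in> ball p \<delta>\<close> by blast
      qed
      ultimately show "w \<in> X - A'" by blast
    qed
    moreover have "x \<in> k i ` u"
      using hxu(1) H(1) xX(1) by (intro rev_image_eqI[of "h i x"]) auto
    moreover have "y \<in> k i ` u"
      using hxu(2) H(1) xX(3) by (intro rev_image_eqI[of "h i y"]) auto
    ultimately have "connected_component (X - A') x y" by (rule connected_componentI)
    then show False using sep unfolding separates_pts_def by auto
  qed
qed


lemma pt_tend:
  assumes "sets_tend_to (\<lambda>i. h i ` P) p" "a \<in> P"
  shows "(\<lambda>i. h i a) \<longlonglongrightarrow> p"
proof (rule topological_tendstoI)
  fix S :: "'a set" assume "open S" "p \<in> S"
  then have "\<forall>\<^sub>F i in sequentially. h i ` P \<subseteq> S" using assms(1) unfolding sets_tend_to_def by blast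
  then show "\<forall>\<^sub>F i in sequentially. h i a \<in> S" by (rule eventually_mono) (use assms(2) in blast)
qed

lemma B_noncompact:
  fixes B :: "'a::metric_space set"
  assumes card: "infinite B \<or> card B > 2" and pres: "\<And>i. h i ` B = B"
    and conv: "\<forall>C. compact C \<and> C \<subseteq> B - {n} \<longrightarrow> sets_tend_to (\<lambda>i. h i ` C) p"
  shows "\<not> compact (B - {n})"
proof
  assume cB: "compact (B - {n})"
  have ns: "\<not> (B - {p} \<subseteq> {q})" for q
  proof
    assume "B - {p} \<subseteq> {q}"
    then have "B \<subseteq> {p, q}" by blast
    moreover have "card {p, q} \<le> 2" by (simp add: card_insert_if)
    ultimately show False using card card_mono[of "{p,q}" B] finite_subset[of B "{p,q}"] by auto
  qed
  obtain q1 where q1: "q1 \<in> B" "q1 \<noteq> p" using ns[of undefined] by blast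
  obtain q2 where q2: "q2 \<in> B" "q2 \<noteq> p" "q2 \<noteq> q1" using ns[of q1] by blast
  have "open (- {q1, q2})" by (simp add: open_Compl)
  moreover have "p \<in> - {q1, q2}" using q1 q2 by auto
  ultimately have "\<forall>\<^sub>F i in sequentially. h i ` (B - {n}) \<subseteq> - {q1, q2}"
    using conv cB unfolding sets_tend_to_def by blast
  then obtain i where i: "h i ` (B - {n}) \<subseteq> - {q1, q2}" by (auto simp: eventually_sequentially)
  have "q = h i n" if "q \<in> B" "q \<in> {q1, q2}" for q
  proof -
    from that pres[of i] obtain b where b: "b \<in> B" "q = h i b" by blast
    show ?thesis
    proof (cases "b = n")
      case True then show ?thesis using b by simp
    next
      case False then have "q \<in> h i ` (B - {n})" using b by blast
      then show ?thesis using i that by blast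
    qed
  qed
  then have "q1 = h i n" "q2 = h i n" using q1 q2 by auto
  then show False using q2(3) by simp
qed

lemma B_sep:
  fixes X B A' :: "'a::metric_space set"
  assumes X: "compact X" "locally connected X" and B: "closed B" "B \<subseteq> X"
    and A': "closed A'" and n: "n \<in> B" "n \<notin> A'" and nc: "\<not> compact (B - {n})"
    and sep: "separates_pts X A' x y" and xy: "x \<in> B" "y \<in> B"
  shows "\<exists>x' y'. x' \<in> B - {n} \<and> y' \<in> B - {n} \<and> separates_pts X A' x' y'"
proof -
  have move: "\<exists>z'\<in>B - {n}. connected_component (X - A') z z'" if z: "z \<in> B" "z \<notin> A'" for z
  proof (cases "z = n")
    case False
    then show ?thesis using z B by (intro bexI[of _ z] connected_component_refl) auto
  next
    case True
    have "openin (top_of_set X) (X - A')"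
    proof -
      have "X - A' = X \<inter> (- A')" by blast
      then show ?thesis using A' by (simp add: openin_open_Int open_Compl)
    qed
    then have "openin (top_of_set X) (connected_component_set (X - A') n)"
      using X(2) n B unfolding locally_connected_open_connected_component by blast
    then obtain W where W: "open W" "connected_component_set (X - A') n = X \<inter> W"
      by (auto simp: openin_open)
    have nW: "n \<in> W" using W(2) connected_component_refl[of n "X - A'"] n B by blast
    show ?thesis
    proof (cases "\<exists>z'\<in>B \<inter> W. z' \<noteq> n")
      case True
      then obtain z' where "z' \<in> B" "z' \<in> W" "z' \<noteq> n" by blast
      then have "connected_component (X - A') n z'" using W(2) B by blast
      then show ?thesis using True \<open>z = n\<close> \<open>z' \<in> B\<close> \<open>z' \<noteq> n\<close> by blast
    next
      case False
      then have "B - {n} = (B \<inter> - W) \<inter> X" using B nW by blast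
      moreover have "compact ((B \<inter> - W) \<inter> X)"
        using X(1) B(1) W(1) by (intro closed_Int_compact closed_Int) (auto simp: closed_Compl)
      ultimately show ?thesis using nc by simp
    qed
  qed
  have "x \<notin> A'" "y \<notin> A'" using sep unfolding separates_pts_def by auto
  then obtain x' y' where x': "x' \<in> B - {n}" "connected_component (X - A') x x'"
    and y': "y' \<in> B - {n}" "connected_component (X - A') y y'"
    using move xy by meson
  have "separates_pts X A' x' y'"
    unfolding separates_pts_def
  proof (intro conjI)
    show "x' \<in> X - A'" "y' \<in> X - A'" using x'(2) y'(2) connected_component_in by blast+
    show "y' \<notin> connected_component_set (X - A') x'"
    proof
      assume "y' \<in> connected_component_set (X - A') x'"
      then have "connected_component (X - A') x' y'" by simp
      then have "connected_component (X - A') x y"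
        using x'(2) y'(2) connected_component_trans connected_component_sym by metis
      then show False using sep unfolding separates_pts_def by simp
    qed
  qed
  then show ?thesis using x' y' by blast
qed

theorem lemma4p5:
  fixes X :: "'a::metric_space set"
    and G :: "('g, 'c) monoid_scheme"
    and \<phi> :: "'g \<Rightarrow> 'a \<Rightarrow> 'a"
    and \<A> :: "'a set set"
    and B :: "'a set" and As :: "'a set list"
    and f :: "nat \<Rightarrow> 'g" and n p :: 'a
  assumes "peano_continuum X" and "no_cut_points X"
    and "acts_by_homeos G X \<phi>"
    and "local_convergence_pairing G \<phi> \<A> X"
    and "B \<in> \<A>" and "set As \<subseteq> \<A>"
    and "crossing_seq X (B # As)"
    and "acts_conv_seq G \<phi> f B n p"
    and "\<forall>A\<in>set As. n \<notin> A \<and> (\<forall>i. \<phi> (inv\<^bsub>G\<^esub> (f i)) p \<notin> A)"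
  shows "\<forall>A\<in>set As. sets_tend_to (\<lambda>i. \<phi> (f i) ` A) p"
proof -
  define h where "h i = \<phi> (f i)" for i
  define k where "k i = \<phi> (inv\<^bsub>G\<^esub> (f i))" for i
  have X: "compact X" "locally connected X" using assms(1) unfolding peano_continuum_def by auto
  have clos: "\<forall>A\<in>\<A>. closed A \<and> A \<subseteq> X" and invA: "\<forall>g\<in>carrier G. \<forall>A\<in>\<A>. \<phi> g ` A \<in> \<A>"
    and cardA: "\<forall>A\<in>\<A>. infinite A \<or> card A > 2" and fin: "\<forall>\<epsilon>>0. finite {A\<in>\<A>. diameter A > \<epsilon>}"
    using assms(4) unfolding local_convergence_pairing_def by auto
  have fc: "\<And>i. f i \<in> carrier G" and pres: "\<And>i. h i ` B = B" and nB: "n \<in> B" and pB: "p \<in> B"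
    and conv: "\<forall>C. compact C \<and> C \<subseteq> B - {n} \<longrightarrow> sets_tend_to (\<lambda>i. h i ` C) p"
    using assms(8) unfolding acts_conv_seq_def conv_seq_maps_def h_def by auto
  have hom: "\<And>i. homeomorphism X X (h i) (k i)"
    using assms(3) fc unfolding acts_by_homeos_def h_def k_def by blast
  have BX: "closed B" "B \<subseteq> X" using clos assms(5) by auto
  have nc: "\<not> compact (B - {n})"
    using B_noncompact[of B h n p] cardA assms(5) pres conv by blast
  have AsA: "\<And>A'. A' \<in> set As \<Longrightarrow> A' \<in> \<A>" using assms(6) by blast
  have hyp: "\<And>A'. A' \<in> set As \<Longrightarrow> n \<notin> A' \<and> (\<forall>i. k i p \<notin> A')" using assms(9) unfolding k_def by blast
  have stepP: "sets_tend_to (\<lambda>i. h i ` A') p"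
    if A': "A' \<in> set As" and alt: "(\<exists>a\<in>A'. (\<lambda>i. h i a) \<longlonglongrightarrow> p) \<or>
              (\<exists>x y. separates_pts X A' x y \<and> (\<lambda>i. h i x) \<longlonglongrightarrow> p \<and> (\<lambda>i. h i y) \<longlonglongrightarrow> p)" for A'
  proof (rule key_conclude[OF X hom fin _ _ _ _ alt])
    have "A' \<in> \<A>" using AsA A' by blast
    then show inA: "h i ` A' \<in> \<A>" for i using invA fc unfolding h_def by blast
    show "closed (h i ` A')" for i using inA[of i] clos by blast
    show sub: "A' \<subseteq> X" using clos \<open>A' \<in> \<A>\<close> by blast
    show "p \<notin> h i ` A'" for i
    proof
      assume "p \<in> h i ` A'"
      then obtain a where a: "a \<in> A'" "p = h i a" by blast
      then have "k i p = a" using hom[of i] sub unfolding homeomorphism_def by auto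
      moreover have "k i p \<notin> A'" using hyp[OF A'] by blast
      ultimately show False using a(1) by simp
    qed
  qed
  have fromP: "sets_tend_to (\<lambda>i. h i ` A') p"
    if A': "A' \<in> set As" and P: "sets_tend_to (\<lambda>i. h i ` P) p" and cr: "crosses X P A'" for A' P
  proof (rule stepP[OF A'])
    show "(\<exists>a\<in>A'. (\<lambda>i. h i a) \<longlonglongrightarrow> p) \<or>
              (\<exists>x y. separates_pts X A' x y \<and> (\<lambda>i. h i x) \<longlonglongrightarrow> p \<and> (\<lambda>i. h i y) \<longlonglongrightarrow> p)"
    proof (cases "P \<inter> A' = {}")
      case False
      then obtain a where "a \<in> P" "a \<in> A'" by blast
      then show ?thesis using pt_tend[OF P] by blast
    next
      case True
      then have "separates X A' P" using cr unfolding crosses_def by blast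
      then obtain x y where "x \<in> P" "y \<in> P" "separates_pts X A' x y" unfolding separates_def by blast
      then show ?thesis using pt_tend[OF P] by blast
    qed
  qed
  have fromB: "sets_tend_to (\<lambda>i. h i ` A') p"
    if A': "A' \<in> set As" and cr: "crosses X B A'" for A'
  proof (rule stepP[OF A'])
    have single: "(\<lambda>i. h i a) \<longlonglongrightarrow> p" if "a \<in> B - {n}" for a
    proof (rule pt_tend[of h "{a}" p a])
      have "compact {a} \<and> {a} \<subseteq> B - {n}" using that by simp
      then show "sets_tend_to (\<lambda>i. h i ` {a}) p" using conv by blast
    qed simp
    have nA: "n \<notin> A'" using hyp[OF A'] by blast
    show "(\<exists>a\<in>A'. (\<lambda>i. h i a) \<longlonglongrightarrow> p) \<or>
              (\<exists>x y. separates_pts X A' x y \<and> (\<lambda>i. h i x) \<longlonglongrightarrow> p \<and> (\<lambda>i. h i y) \<longlonglongrightarrow> p)"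
    proof (cases "B \<inter> A' = {}")
      case False
      then obtain a where "a \<in> B" "a \<in> A'" by blast
      then show ?thesis using single nA by blast
    next
      case True
      then have "separates X A' B" using cr unfolding crosses_def by blast
      then obtain x y where xy: "x \<in> B" "y \<in> B" "separates_pts X A' x y" unfolding separates_def by blast
      have "closed A'" using AsA[OF A'] clos by blast
      from B_sep[OF X BX this nB nA nc xy(3) xy(1,2)]
      show ?thesis using single by blast
    qed
  qed
  have all: "sets_tend_to (\<lambda>i. h i ` (As ! j)) p" if "j < length As" for j
    using that
  proof (induction j)
    case 0
    have "Suc 0 < length (B # As) \<longrightarrow> crosses X ((B # As) ! 0) ((B # As) ! Suc 0)"
      using assms(7) unfolding crossing_seq_def by blast
    then have "crosses X B (As ! 0)" using 0 by simp
    then show ?case using fromB[of "As ! 0"] 0 by simp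
  next
    case (Suc j)
    have "Suc (Suc j) < length (B # As) \<longrightarrow> crosses X ((B # As) ! Suc j) ((B # As) ! Suc (Suc j))"
      using assms(7) unfolding crossing_seq_def by blast
    then have "crosses X (As ! j) (As ! Suc j)" using Suc.prems by simp
    then show ?case using fromP[of "As ! Suc j" "As ! j"] Suc by simp
  qed
  show ?thesis
  proof
    fix A assume "A \<in> set As"
    then obtain j where "j < length As" "A = As ! j" by (auto simp: in_set_conv_nth)
    then show "sets_tend_to (\<lambda>i. \<phi> (f i) ` A) p" using all unfolding h_def by blast
  qed
qed

end
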